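(* Let $N\geq 1$ be an integer. Then for all $0<t<\pi/2$, \[ L_N(t)<t\sec^2 t-\tan t-\sum_{j=1}^{N-1}\frac{2j\cdot 2^{2j+2}(2^{2j+2}-1)|B_{2j+2}|}{(2j+2)!}t^{2j+1}-\frac{N\cdot 2^{2N+4}t^{2N+1}}{\pi^{2N}(\pi^2-4t^2)}-\frac{2^{2N+6}t^{2N+3}}{\pi^{2N}(\pi^2-4t^2)^2}<M_N(t), \] where \[ L_N(t)=\frac{N\cdot 2^{2N+4}t^{2N+1}}{\pi^{2N+2}}\left\{\frac{(2^{2N+2}-1)\pi^{2N+2}|B_{2N+2}|}{2\cdot(2N+2)!}-1\right\}+\frac{2^{2N+6}t^{2N+3}}{\pi^{2N+4}}\left\{\frac{(2^{2N+4}-1)\pi^{2N+4}|B_{2N+4}|}{2\cdot(2N+4)!}-1\right\} \] and \[ M_N(t)=\frac{N\cdot 2^{2N+2}t^{2N+1}}{\pi^{2N+2}}\sum_{k=2}^{\infty}\frac{1}{(2k-1)^{2N}k(k-1)}+\frac{2^{2N+2}t^{2N+3}}{\pi^{2N+4}}\sum_{k=2}^{\infty}\frac{1}{(2k-1)^{2N}k^2(k-1)^2}. \]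
   Context: The Bernoulli numbers $B_n$ are defined by $\frac{t}{e^t-1}=\sum_{n=0}^\infty B_n\frac{t^n}{n!}$ for $|t|<2\pi$. An empty sum is understood to be zero. *)

theory Defs
  imports "HOL-Analysis.Analysis"
begin

text \<open>Bernoulli numbers B_n, defined by t/(e^t-1) = sum B_n t^n/n!
  (so B_1 = -1/2). Equivalently, via the standard recurrence
  B_0 = 1 and sum_{k=0}^{n} (n+1 choose k) B_k = 0 for n >= 1.\<close>
fun bernoulli :: "nat \<Rightarrow> real" where
  "bernoulli n = (if n = 0 then 1
     else - (\<Sum>k<n. real ((n+1) choose k) * bernoulli k) / real (n+1))"

end

theory Submission
  imports Defs
begin

lemma Gamma_refl_real:
  fixes x :: real assumes "0 < x" "x < 1"
  shows "Gamma x * Gamma (1-x) = pi / sin (pi*x)"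
proof -
  have "Gamma (complex_of_real x) * Gamma (1 - complex_of_real x) = of_real pi / sin (of_real pi * of_real x)"
    by (rule Gamma_reflection_complex)
  also have "1 - complex_of_real x = of_real (1 - x)" by simp
  finally have "of_real (Gamma x * Gamma (1-x)) = (of_real (pi / sin (pi*x)) :: complex)"
    by (simp add: Gamma_complex_of_real sin_of_real[symmetric] del: of_real_diff)
  thus ?thesis using of_real_eq_iff by blast
qed

lemma not_nonpos_int_real: "(x::real) > 0 \<Longrightarrow> x \<notin> \<int>\<^sub>\<le>\<^sub>0"
  by (auto elim!: nonpos_Ints_cases)

lemma digamma_refl:
  fixes x :: real assumes x: "0 < x" "x < 1"
  shows "Digamma (1-x) - Digamma x = pi * cot (pi*x)"
proof -
  have s: "sin (pi*x) > 0" using x by (intro sin_gt_zero) auto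
  have n1: "x \<notin> \<int>\<^sub>\<le>\<^sub>0" "1 - x \<notin> \<int>\<^sub>\<le>\<^sub>0" using x by (auto intro!: not_nonpos_int_real)
  have d1: "((\<lambda>x. Gamma x * Gamma (1-x)) has_field_derivative
      Gamma x * Digamma x * Gamma (1-x) + Gamma x * (Gamma (1-x) * Digamma (1-x) * (-1))) (at x)"
    using n1 by (auto intro!: derivative_eq_intros)
  have d2: "((\<lambda>x. pi / sin (pi*x)) has_field_derivative
      - (pi * (cos (pi*x) * pi)) / (sin (pi*x))^2) (at x)"
    using s by (auto intro!: derivative_eq_intros simp: power2_eq_square)
  have d1': "((\<lambda>x. pi / sin (pi*x)) has_field_derivative
      Gamma x * Digamma x * Gamma (1-x) + Gamma x * (Gamma (1-x) * Digamma (1-x) * (-1))) (at x)"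
    by (rule has_field_derivative_transform_within_open[OF d1, of "{0<..<1}"]) (use x Gamma_refl_real in auto)
  from DERIV_unique[OF d1' d2]
  have "Gamma x * Gamma (1-x) * (Digamma x - Digamma (1-x)) = - (pi * (cos (pi*x) * pi)) / (sin (pi*x))^2"
    by (simp add: algebra_simps)
  hence "pi / sin (pi*x) * (Digamma x - Digamma (1-x)) = - (pi * (cos (pi*x) * pi)) / (sin (pi*x))^2"
    using Gamma_refl_real[OF x] by simp
  hence "(pi * sin (pi*x)) * (sin (pi*x) * Digamma (1-x)) = (pi * sin (pi*x)) * (pi * cos (pi*x) + Digamma x * sin (pi*x))"
    using s by (simp add: field_simps power2_eq_square)
  hence "sin (pi*x) * Digamma (1-x) = pi * cos (pi*x) + Digamma x * sin (pi*x)"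
    using s by (subst (asm) mult_left_cancel) auto
  thus ?thesis using s by (simp add: cot_def field_simps)
qed

lemma trigamma_refl:
  fixes x :: real assumes x: "0 < x" "x < 1"
  shows "Polygamma 1 x + Polygamma 1 (1-x) = pi^2 / (sin (pi*x))^2"
proof -
  have s: "sin (pi*x) > 0" using x by (intro sin_gt_zero) auto
  have n1: "x \<notin> \<int>\<^sub>\<le>\<^sub>0" "1 - x \<notin> \<int>\<^sub>\<le>\<^sub>0" using x by (auto intro!: not_nonpos_int_real)
  have d1: "((\<lambda>x. Digamma (1-x) - Digamma x) has_field_derivative
      Polygamma 1 (1-x) * (-1) - Polygamma 1 x) (at x)"
    using n1 by (auto intro!: derivative_eq_intros)
  have d2: "((\<lambda>x. pi * cot (pi*x)) has_field_derivative
      pi * (- inverse ((sin (pi*x))^2) * pi)) (at x)"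
    using s by (auto intro!: derivative_eq_intros DERIV_cot[THEN DERIV_chain2])
  have d1': "((\<lambda>x. pi * cot (pi*x)) has_field_derivative
      Polygamma 1 (1-x) * (-1) - Polygamma 1 x) (at x)"
    by (rule has_field_derivative_transform_within_open[OF d1, of "{0<..<1}"]) (use x digamma_refl in auto)
  from DERIV_unique[OF d1' d2] show ?thesis by (simp add: field_simps power2_eq_square)
qed

definition uu :: "nat \<Rightarrow> real" where "uu k = (real k + 1/2) * pi"

lemma uu_pos: "uu k > 0" by (simp add: uu_def)
lemma uu_ge: "uu k \<ge> pi/2" by (simp add: uu_def algebra_simps)

lemma digamma_sums:
  fixes x :: real assumes x: "0 < x" "x < 1"
  shows "(\<lambda>k. 1/(x + real k) - 1/(1 - x + real k)) sums (Digamma (1-x) - Digamma x)"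
proof -
  have a: "(\<lambda>k. inverse (real (Suc k)) - inverse (x + real k)) sums (Digamma x + euler_mascheroni)"
    using summable_Digamma[of x] x by (simp add: Digamma_def summable_sums)
  have b: "(\<lambda>k. inverse (real (Suc k)) - inverse ((1-x) + real k)) sums (Digamma (1-x) + euler_mascheroni)"
    using summable_Digamma[of "1-x"] x by (simp add: Digamma_def summable_sums)
  from sums_diff[OF b a] show ?thesis by (simp add: divide_inverse)
qed

lemma trigamma_sums:
  fixes x :: real assumes x: "0 < x"
  shows "(\<lambda>k. 1/(x + real k)^2) sums (Polygamma 1 x)"
proof -
  have "summable (\<lambda>k. inverse ((x + real k)^2))"
    using x by (intro Polygamma_converges') auto
  hence "(\<lambda>k. inverse ((x + real k)^2)) sums (\<Sum>k. inverse ((x + real k)^2))"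
    by (rule summable_sums)
  also have "(\<Sum>k. inverse ((x + real k)^2)) = Polygamma 1 x"
    unfolding Polygamma_def by (simp add: power2_eq_square)
  finally show ?thesis by (simp add: divide_inverse)
qed

lemma tan_pf:
  fixes t :: real assumes t: "\<bar>t\<bar> < pi/2"
  shows "(\<lambda>k. 1/(uu k - t) - 1/(uu k + t)) sums tan t"
proof -
  define x where "x = 1/2 + t/pi"
  have x: "0 < x" "x < 1" using t pi_gt_zero by (auto simp: x_def field_simps abs_less_iff)
  have c: "cos t > 0" using t by (intro cos_gt_zero_pi) (auto simp: abs_less_iff)
  have "pi * cot (pi * x) = - pi * tan t"
    by (simp add: x_def cot_def tan_def algebra_simps sin_add cos_add)
  have e1: "\<And>k. 1/(x + real k) = pi / (uu k + t)" and e2: "\<And>k. 1/(1 - x + real k) = pi / (uu k - t)"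
    by (simp_all add: x_def uu_def field_simps)
  have "(\<lambda>k. 1/(x + real k) - 1/(1 - x + real k)) = (\<lambda>k. pi * (1/(uu k + t) - 1/(uu k - t)))"
    by (rule ext) (simp only: e1 e2 right_diff_distrib, simp)
  hence "(\<lambda>k. pi * (1/(uu k + t) - 1/(uu k - t))) sums (- pi * tan t)"
    using digamma_sums[OF x] digamma_refl[OF x] \<open>pi * cot (pi * x) = - pi * tan t\<close>
    by simp
  from sums_mult[OF this, of "-1/pi"] show ?thesis by (simp add: algebra_simps)
qed

lemma sec2_pf:
  fixes t :: real assumes t: "\<bar>t\<bar> < pi/2"
  shows "(\<lambda>k. 1/(uu k - t)^2 + 1/(uu k + t)^2) sums (1 / cos t)^2"
proof -
  define x where "x = 1/2 + t/pi"
  have x: "0 < x" "x < 1" using t pi_gt_zero by (auto simp: x_def field_simps abs_less_iff)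
  have s: "sin (pi * x) = cos t"
    by (simp add: x_def algebra_simps sin_add)
  have e1: "\<And>k. 1/(x + real k)^2 = pi^2 / (uu k + t)^2" and e2: "\<And>k. 1/(1 - x + real k)^2 = pi^2 / (uu k - t)^2"
    by (simp_all add: x_def uu_def field_simps)
  have "(\<lambda>k. 1/(1 - x + real k)^2 + 1/(x + real k)^2) = (\<lambda>k. pi^2 * (1/(uu k - t)^2 + 1/(uu k + t)^2))"
    by (rule ext) (simp only: e1 e2 distrib_left, simp)
  hence "(\<lambda>k. pi^2 * (1/(uu k - t)^2 + 1/(uu k + t)^2)) sums (pi^2 / (cos t)^2)"
    using sums_add[OF trigamma_sums[of "1-x"] trigamma_sums[of x]] trigamma_refl[OF x] x s
    by (simp add: add.commute)
  from sums_mult[OF this, of "1/pi^2"] show ?thesis by (simp add: power_divide)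
qed

lemma uu_ge1: "uu k \<ge> real k + 1"
proof -
  have "(real k + 1/2) * pi \<ge> (real k + 1/2) * 3" using pi_gt3
    by (intro mult_left_mono) auto
  thus ?thesis by (simp add: uu_def)
qed

lemma summable_uu_pow:
  assumes "m \<ge> 2" shows "summable (\<lambda>k. 1 / uu k ^ m)"
proof (rule summable_comparison_test')
  show "summable (\<lambda>k. 1 / (real k + 1)^2)"
    using inverse_squares_sums by (simp add: sums_iff add.commute)
  fix k :: nat
  have "(real k + 1)^2 \<le> (real k + 1)^m" using assms by (intro power_increasing) auto
  also have "\<dots> \<le> uu k ^ m" using uu_ge1[of k] by (intro power_mono) auto
  finally show "norm (1 / uu k ^ m) \<le> 1 / (real k + 1)^2"
    using uu_pos[of k] by (simp add: divide_simps)
qed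

lemma geo_uu:
  fixes t :: real assumes t: "\<bar>t\<bar> < pi/2"
  shows "(\<lambda>m. 2 * t^(2*m+1) / uu k^(2*m+2)) sums (1/(uu k - t) - 1/(uu k + t))"
proof -
  have u: "uu k > \<bar>t\<bar>" using uu_ge[of k] t by linarith
  have tt: "t^2 < uu k^2" using u by (metis abs_ge_zero power2_abs power_strict_mono zero_less_numeral)
  have q: "norm (t^2 / uu k^2) < 1" using tt uu_pos[of k] by simp
  have ne: "uu k - t \<noteq> 0" "uu k + t \<noteq> 0" using u by (auto simp: abs_less_iff)
  have "(\<lambda>m. (t^2/uu k^2)^m) sums (1 / (1 - t^2/uu k^2))" by (rule geometric_sums[OF q])
  from sums_mult[OF this, of "2*t/uu k^2"]
  have "(\<lambda>m. 2*t/uu k^2 * (t^2/uu k^2)^m) sums (2*t/uu k^2 * (1 / (1 - t^2/uu k^2)))" .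
  moreover have "\<And>m. 2*t/uu k^2 * (t^2/uu k^2)^m = 2 * t^(2*m+1) / uu k^(2*m+2)"
  proof -
    fix m
    have "(t^2/uu k^2)^m = t^(2*m)/uu k^(2*m)" by (simp add: power_divide power_mult)
    thus "2*t/uu k^2 * (t^2/uu k^2)^m = 2 * t^(2*m+1) / uu k^(2*m+2)"
      using uu_pos[of k] by (simp add: power_add field_simps power2_eq_square)
  qed
  moreover have "2*t/uu k^2 * (1 / (1 - t^2/uu k^2)) = 1/(uu k - t) - 1/(uu k + t)"
    using tt ne uu_pos[of k] by (simp add: field_simps power2_eq_square)
  ultimately show ?thesis by simp
qed

definition Acoef :: "nat \<Rightarrow> real" where "Acoef m = (\<Sum>k. 2 / uu k ^ (2*m+2))"

lemma Acoef_sums: "(\<lambda>k. 2 / uu k ^ (2*m+2)) sums Acoef m"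
  unfolding Acoef_def
  using summable_sums[OF summable_mult[OF summable_uu_pow[of "2*m+2"], of 2]] by simp

lemma tan_has_sum:
  fixes t :: real assumes t: "\<bar>t\<bar> < pi/2"
  shows "((\<lambda>m. Acoef m * t^(2*m+1)) has_sum tan t) UNIV"
proof -
  define F where "F p = 2 * t^(2 * snd p+1) / uu (fst p)^(2 * snd p+2)" for p :: "nat \<times> nat"
  define g where "g k = 1/(uu k - \<bar>t\<bar>) - 1/(uu k + \<bar>t\<bar>)" for k
  define b where "b k = 1/(uu k - t) - 1/(uu k + t)" for k
  have ta: "\<bar>\<bar>t\<bar>\<bar> < pi/2" using t by simp
  have u: "uu k > \<bar>t\<bar>" for k using uu_ge[of k] t by linarith
  have normF: "norm (F (k,m)) = 2 * \<bar>t\<bar>^(2*m+1) / uu k^(2*m+2)" for k m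
    using uu_pos[of k] by (simp add: F_def abs_mult power_abs)
  have g_nonneg: "g k \<ge> 0" for k using u[of k] by (simp add: g_def divide_simps)
  have gsum: "(g has_sum tan \<bar>t\<bar>) UNIV"
    using tan_pf[OF ta] g_nonneg unfolding g_def by (intro sums_nonneg_imp_has_sum) auto
  have inner_abs: "((\<lambda>m. norm (F (k,m))) has_sum g k) UNIV" for k
    unfolding normF g_def using geo_uu[OF ta, of k] uu_pos[of k]
    by (intro sums_nonneg_imp_has_sum) auto
  have SI: "(\<lambda>p. norm (F p)) summable_on (Sigma UNIV (\<lambda>_. UNIV))"
  proof (rule summable_on_SigmaI[where g = g])
    show "\<And>x. x \<in> UNIV \<Longrightarrow> ((\<lambda>y. norm (F (x, y))) has_sum g x) UNIV" by (rule inner_abs)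
    show "g summable_on UNIV" using gsum by (rule has_sum_imp_summable)
  qed simp
  have "Sigma UNIV (\<lambda>_::nat. UNIV::nat set) = UNIV" by auto
  hence "(\<lambda>p. norm (F p)) summable_on UNIV" using SI by metis
  hence Fsum: "F summable_on UNIV"
    by (rule abs_summable_summable)
  have inner: "((\<lambda>m. F (k,m)) has_sum b k) UNIV" for k
  proof (rule norm_summable_imp_has_sum)
    show "summable (\<lambda>m. norm (F (k,m)))" using inner_abs[of k] has_sum_imp_sums sums_summable by blast
    show "(\<lambda>m. F (k,m)) sums b k" unfolding F_def b_def using geo_uu[OF t, of k] by simp
  qed
  have bnorm: "norm (b k) = g k" for k
  proof -
    have ne: "uu k - t \<noteq> 0" "uu k + t \<noteq> 0" "uu k - \<bar>t\<bar> \<noteq> 0" "uu k + \<bar>t\<bar> \<noteq> 0"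
      using u[of k] by (auto simp: abs_less_iff)
    have "b k = 2*t/(uu k^2 - t^2)"
      unfolding b_def using ne by (simp add: field_simps power2_eq_square)
    moreover have "g k = 2*\<bar>t\<bar>/(uu k^2 - \<bar>t\<bar>^2)"
      unfolding g_def using ne by (simp add: field_simps power2_eq_square)
    moreover have "t^2 < uu k^2" using u[of k] by (metis abs_ge_zero power2_abs power_strict_mono zero_less_numeral)
    ultimately show ?thesis by (simp add: abs_mult abs_divide)
  qed
  have bsum: "(b has_sum tan t) UNIV"
  proof (rule norm_summable_imp_has_sum)
    show "summable (\<lambda>k. norm (b k))" unfolding bnorm using gsum has_sum_imp_sums sums_summable by blast
    show "b sums tan t" unfolding b_def by (rule tan_pf[OF t])
  qed
  have "(F has_sum infsum F UNIV) (Sigma UNIV (\<lambda>_::nat. UNIV::nat set))"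
    using Fsum by simp
  hence "(b has_sum infsum F UNIV) UNIV"
    by (rule has_sum_Sigma') (rule inner)
  hence "infsum F UNIV = tan t" using bsum by (rule has_sum_unique)
  hence Fval: "(F has_sum tan t) UNIV"
    using Fsum has_sum_infsum by fastforce
  hence "(F has_sum tan t) (UNIV \<times> UNIV)" by simp
  hence "((\<lambda>(m,k). F (k,m)) has_sum tan t) (UNIV \<times> UNIV)"
    by (rule has_sum_swap[THEN iffD1])
  hence sw: "((\<lambda>p. F (snd p, fst p)) has_sum tan t) (Sigma UNIV (\<lambda>_. UNIV))"
    by (simp add: case_prod_unfold)
  have inner2: "((\<lambda>k. F (k,m)) has_sum Acoef m * t^(2*m+1)) UNIV" for m
  proof -
    have "((\<lambda>k. 2 / uu k ^ (2*m+2)) has_sum Acoef m) UNIV"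
      using Acoef_sums[of m] uu_pos by (intro sums_nonneg_imp_has_sum) (auto intro: less_imp_le)
    from has_sum_cmult_right[OF this, of "t^(2*m+1)"]
    show ?thesis by (simp add: F_def mult.commute)
  qed
  show ?thesis
    using sw by (rule has_sum_Sigma') (use inner2 in simp)
qed

lemma fps_zero_expansion_real:
  fixes H :: "real fps"
  assumes "(\<lambda>x. 0) has_fps_expansion H"
  shows "H = 0"
proof (rule ccontr)
  assume H: "H \<noteq> 0"
  define n where "n = subdegree H"
  define S where "S = fps_shift n H"
  have r: "fps_conv_radius H > 0" and ev: "eventually (\<lambda>z. eval_fps H z = 0) (nhds 0)"
    using assms by (auto simp: has_fps_expansion_def)
  have rS: "fps_conv_radius S > 0" using r by (simp add: S_def)
  have ev2: "eventually (\<lambda>z. z \<in> eball 0 (fps_conv_radius H)) (nhds (0::real))"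
    using r by (intro eventually_nhds_in_open) (auto simp: zero_ereal_def)
  have "eventually (\<lambda>z. eval_fps S z = 0) (at (0::real))"
  proof -
    have "eventually (\<lambda>z. z \<noteq> 0 \<and> eval_fps H z = 0 \<and> z \<in> eball 0 (fps_conv_radius H)) (at (0::real))"
      using ev ev2 by (auto simp: eventually_at_filter elim: eventually_elim2)
    thus ?thesis
      by eventually_elim (auto simp: S_def n_def eval_fps_shift dist_norm)
  qed
  hence l0: "(eval_fps S \<longlongrightarrow> 0) (at 0)" by (rule tendsto_eventually)
  have "continuous (at 0) (eval_fps S)" using rS by (intro continuous_eval_fps) (simp add: zero_ereal_def)
  hence "(eval_fps S \<longlongrightarrow> eval_fps S 0) (at 0)" by (simp add: continuous_at)
  with l0 have "eval_fps S 0 = 0" using tendsto_unique by (metis at_neq_bot)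
  hence "fps_nth H n = 0" by (simp add: S_def eval_fps_at_0)
  with H show False by (simp add: n_def)
qed

lemma fps_expansion_unique_real:
  fixes F G :: "real fps"
  assumes "f has_fps_expansion F" "f has_fps_expansion G"
  shows "F = G"
proof -
  have "(\<lambda>x. f x - f x) has_fps_expansion F - G" by (intro has_fps_expansion_diff assms)
  hence "F - G = 0" by (intro fps_zero_expansion_real) simp
  thus ?thesis by simp
qed

definition Afps :: "real fps" where
  "Afps = Abs_fps (\<lambda>n. if even n then 0 else Acoef (n div 2))"

lemma Afps_sums:
  fixes t :: real assumes t: "\<bar>t\<bar> < pi/2"
  shows "(\<lambda>n. fps_nth Afps n * t^n) sums tan t"
proof -
  have inj: "inj (\<lambda>m::nat. 2*m+1)" by (auto simp: inj_def)
  have "(((\<lambda>n. fps_nth Afps n * t^n) \<circ> (\<lambda>m. 2*m+1)) has_sum tan t) UNIV"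
    using tan_has_sum[OF t] by (simp add: o_def Afps_def)
  moreover have "((\<lambda>n. fps_nth Afps n * t^n) has_sum tan t) (range (\<lambda>m. 2*m+1)) \<longleftrightarrow>
     (((\<lambda>n. fps_nth Afps n * t^n) \<circ> (\<lambda>m. 2*m+1)) has_sum tan t) UNIV"
    by (rule has_sum_reindex[OF inj])
  ultimately have "((\<lambda>n. fps_nth Afps n * t^n) has_sum tan t) (range (\<lambda>m. 2*m+1))" by blast
  moreover have "((\<lambda>n. fps_nth Afps n * t^n) has_sum tan t) (range (\<lambda>m. 2*m+1)) \<longleftrightarrow>
                 ((\<lambda>n. fps_nth Afps n * t^n) has_sum tan t) UNIV"
  proof (rule has_sum_cong_neutral)
    fix x :: nat assume x: "x \<in> UNIV - range (\<lambda>m. 2*m+1)"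
    have "even x"
    proof (rule ccontr)
      assume "\<not> even x"
      then obtain m where "x = 2*m+1" by (elim oddE)
      with x show False by auto
    qed
    thus "fps_nth Afps x * t^x = 0" by (simp add: Afps_def)
  qed auto
  ultimately have "((\<lambda>n. fps_nth Afps n * t^n) has_sum tan t) UNIV" by blast
  thus ?thesis by (rule has_sum_imp_sums)
qed

lemma tan_expansion_A: "tan has_fps_expansion Afps"
proof (rule has_fps_expansionI)
  have "eventually (\<lambda>t::real. t \<in> ball 0 (pi/2)) (nhds 0)"
    by (intro eventually_nhds_in_open) auto
  thus "eventually (\<lambda>t. (\<lambda>n. fps_nth Afps n * t^n) sums tan t) (nhds 0)"
    by eventually_elim (auto intro!: Afps_sums)
qed

lemma Afps_tan: "Afps = fps_tan 1"
  by (rule fps_expansion_unique_real[OF tan_expansion_A has_fps_expansion_tan'])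

lemma Afps_cos: "Afps * fps_cos 1 = fps_sin 1"
proof -
  have "fps_nth (fps_cos (1::real)) 0 \<noteq> 0" by simp
  hence "inverse (fps_cos (1::real)) * fps_cos 1 = 1" by (rule inverse_mult_eq_1)
  thus ?thesis unfolding Afps_tan fps_tan_def
    by (simp add: fps_divide_unit mult.assoc)
qed

declare bernoulli.simps[simp del]

lemma bernoulli_0: "bernoulli 0 = 1" by (simp add: bernoulli.simps)

lemma bernoulli_rec: "m \<ge> 1 \<Longrightarrow> (\<Sum>k<Suc m. real (Suc m choose k) * bernoulli k) = 0"
proof -
  assume m: "m \<ge> 1"
  have "bernoulli m * real (m+1) = - (\<Sum>k<m. real ((m+1) choose k) * bernoulli k)"
    using m by (subst bernoulli.simps) (simp add: field_simps)
  thus ?thesis by (simp add: algebra_simps)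
qed

lemma bernoulli_conv:
  assumes n: "n \<ge> 1"
  shows "(\<Sum>k<n. bernoulli k / (fact k * fact (n-k))) = (if n = 1 then 1 else 0)"
proof (cases "n = 1")
  case True thus ?thesis by (simp add: bernoulli_0)
next
  case False
  then obtain m where m: "n = Suc m" "m \<ge> 1" using n by (cases n) auto
  have "(\<Sum>k<n. bernoulli k / (fact k * fact (n-k))) = (\<Sum>k<n. real (n choose k) * bernoulli k) / fact n"
    by (simp add: sum_divide_distrib binomial_fact field_simps)
  also have "\<dots> = 0" using bernoulli_rec[OF m(2)] m(1) by simp
  finally show ?thesis using False by simp
qed

definition Bc :: "complex \<Rightarrow> complex fps" where
  "Bc c = Abs_fps (\<lambda>n. of_real (bernoulli n) * c^n / fact n)"

lemma Bc_mult: "Bc c * (fps_exp c - 1) = fps_const c * fps_X"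
proof (rule fps_ext)
  fix n
  show "fps_nth (Bc c * (fps_exp c - 1)) n = fps_nth (fps_const c * fps_X) n"
  proof (cases "n = 0")
    case True thus ?thesis by (simp add: fps_mult_nth)
  next
    case False
    have "fps_nth (Bc c * (fps_exp c - 1)) n = (\<Sum>i=0..n. of_real (bernoulli i) * c^i / fact i *
            (if n - i = 0 then 0 else c^(n-i) / fact (n-i)))"
      unfolding fps_mult_nth by (intro sum.cong refl) (auto simp: Bc_def)
    also have "\<dots> = (\<Sum>i<n. c^n * of_real (bernoulli i / (fact i * fact (n-i))))"
    proof -
      have "{0..n} = insert n {..<n}" by auto
      hence "(\<Sum>i=0..n. of_real (bernoulli i) * c^i / fact i *
            (if n - i = 0 then 0 else c^(n-i) / fact (n-i))) =
            (\<Sum>i<n. of_real (bernoulli i) * c^i / fact i * (c^(n-i) / fact (n-i)))"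
        by (simp add: sum.insert mult.commute)
      also have "\<dots> = (\<Sum>i<n. c^n * of_real (bernoulli i / (fact i * fact (n-i))))"
        by (intro sum.cong refl) (simp add: field_simps power_add[symmetric])
      finally show ?thesis .
    qed
    also have "\<dots> = c^n * of_real (\<Sum>i<n. bernoulli i / (fact i * fact (n-i)))"
      by (simp add: sum_distrib_left)
    also have "\<dots> = (if n = 1 then c else 0)"
      using False by (subst bernoulli_conv) auto
    also have "\<dots> = fps_nth (fps_const c * fps_X) n" by (simp add: fps_X_def)
    finally show ?thesis .
  qed
qed

lemma fps_const_ii_sq: "fps_const \<i> * fps_const \<i> = (-1 :: complex fps)"
  by simp

lemma main_formal:
  "(- (fps_const \<i> * fps_X) + Bc (2*\<i>) - Bc (4*\<i>)) * fps_cos (1::complex) = fps_X * fps_sin 1"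
proof -
  define I where "I = fps_const (\<i>::complex)"
  define C where "C = fps_cos (1::complex)"
  define S where "S = fps_sin (1::complex)"
  define u where "u = fps_exp (\<i>::complex)"
  define X where "X = (fps_X :: complex fps)"
  define B2 where "B2 = Bc (2*\<i>)"
  define B4 where "B4 = Bc (4*\<i>)"
  have u: "u = C + I * S" using fps_exp_ii_sin_cos[of 1] by (simp add: u_def C_def I_def S_def)
  have sc: "C^2 + S^2 = 1" unfolding C_def S_def by (rule fps_sin_cos_sum_of_squares)
  have II: "I * I = -1" unfolding I_def by (rule fps_const_ii_sq)
  have II': "\<And>x. I * (I * x) = - x" by (simp add: mult.assoc[symmetric] II)
  have u2: "u^2 = fps_exp (2*\<i>)" unfolding u_def fps_exp_power_mult by simp
  have u4: "u^4 = fps_exp (4*\<i>)" unfolding u_def fps_exp_power_mult by simp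
  have c2: "fps_const (2*\<i>) = 2 * I" unfolding I_def by (simp add: numeral_fps_const)
  have c4: "fps_const (4*\<i>) = 4 * I" unfolding I_def by (simp add: numeral_fps_const)
  have e2: "B2 * (u^2 - 1) = 2 * I * X" unfolding B2_def u2 X_def using Bc_mult[of "2*\<i>"] c2 by simp
  have e4: "B4 * (u^4 - 1) = 4 * I * X" unfolding B4_def u4 X_def using Bc_mult[of "4*\<i>"] c4 by simp
  have d1: "u^2 - 1 = 2 * I * S * u"
  proof -
    have "u^2 - 1 = u^2 - (C^2 + S^2)" using sc by simp
    also have "\<dots> = 2 * I * S * C + (I * I) * S^2 - S^2" unfolding u by (simp add: power2_eq_square algebra_simps)
    also have "\<dots> = 2 * I * S * (C + I * S)" by (simp add: II II' power2_eq_square algebra_simps)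
    finally show ?thesis by (simp add: u)
  qed
  have d2: "u^2 + 1 = 2 * C * u"
  proof -
    have "u^2 + 1 = u^2 + (C^2 + S^2)" using sc by simp
    also have "\<dots> = 2 * C^2 + 2 * I * S * C + (I * I) * S^2 + S^2" unfolding u by (simp add: power2_eq_square algebra_simps)
    also have "\<dots> = 2 * C * (C + I * S)" by (simp add: II II' power2_eq_square algebra_simps)
    finally show ?thesis by (simp add: u)
  qed
  have f4: "u^4 - 1 = (u^2 - 1) * (u^2 + 1)" by (simp add: algebra_simps power2_eq_square power4_eq_xxxx)
  have "(- (I * X) + B2 - B4) * (u^4 - 1) = - (I * X) * (u^4 - 1) + B2 * (u^2 - 1) * (u^2 + 1) - B4 * (u^4 - 1)"
    unfolding f4 by (simp add: algebra_simps)
  also have "\<dots> = - (I * X) * (u^4 - 1) + 2 * I * X * (u^2 + 1) - 4 * I * X"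
    by (simp only: e2 e4)
  also have "\<dots> = - (I * X) * (u^2 - 1) * (u^2 - 1)"
    unfolding f4 by (simp add: algebra_simps)
  also have "\<dots> = - 4 * (I * I) * I * X * S * S * u * u" unfolding d1 by (simp add: algebra_simps)
  also have "\<dots> = 4 * I * X * S * S * u * u" by (simp add: II)
  finally have L: "(- (I * X) + B2 - B4) * (u^4 - 1) = 4 * I * X * S * S * u * u" .
  have R: "X * S * (u^4 - 1) = 4 * I * X * S * S * C * u * u"
    unfolding f4 d1 d2 by (simp add: algebra_simps)
  have key: "((- (I * X) + B2 - B4) * C) * (u^4 - 1) = (X * S) * (u^4 - 1)"
    using L R by (metis (no_types, lifting) mult.assoc mult.commute)
  have nz: "u^4 - 1 \<noteq> 0"
  proof
    assume "u^4 - 1 = 0"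
    hence "fps_nth (u^4 - 1) 1 = 0" by simp
    thus False unfolding u4 by simp
  qed
  from key nz have "(- (I * X) + B2 - B4) * C = X * S" by (simp only: mult_cancel_right) simp
  thus ?thesis by (simp add: I_def X_def B2_def B4_def C_def S_def)
qed

definition Ac :: "complex fps" where "Ac = Abs_fps (\<lambda>n. complex_of_real (fps_nth Afps n))"

lemma cos_nth_of_real: "fps_nth (fps_cos (1::complex)) n = complex_of_real (fps_nth (fps_cos (1::real)) n)"
  by (simp add: fps_cos_def)

lemma sin_nth_of_real: "fps_nth (fps_sin (1::complex)) n = complex_of_real (fps_nth (fps_sin (1::real)) n)"
  by (simp add: fps_sin_def)

lemma Ac_cos: "Ac * fps_cos (1::complex) = fps_sin 1"
proof (rule fps_ext)
  fix n
  have "fps_nth (Ac * fps_cos (1::complex)) n =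
        (\<Sum>i=0..n. complex_of_real (fps_nth Afps i * fps_nth (fps_cos (1::real)) (n-i)))"
    unfolding fps_mult_nth by (simp add: Ac_def cos_nth_of_real)
  also have "\<dots> = complex_of_real (fps_nth (Afps * fps_cos 1) n)"
    unfolding fps_mult_nth by simp
  also have "\<dots> = fps_nth (fps_sin 1) n" by (simp add: Afps_cos sin_nth_of_real)
  finally show "fps_nth (Ac * fps_cos (1::complex)) n = fps_nth (fps_sin 1) n" .
qed

lemma X_Ac: "fps_X * Ac = - (fps_const \<i> * fps_X) + Bc (2*\<i>) - Bc (4*\<i>)"
proof -
  have "(fps_X * Ac) * fps_cos (1::complex) = (- (fps_const \<i> * fps_X) + Bc (2*\<i>) - Bc (4*\<i>)) * fps_cos 1"
    by (simp only: mult.assoc Ac_cos main_formal)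
  moreover have "fps_cos (1::complex) \<noteq> 0"
  proof
    assume "fps_cos (1::complex) = 0"
    hence "fps_nth (fps_cos (1::complex)) 0 = 0" by simp
    thus False by simp
  qed
  ultimately show ?thesis by (simp only: mult_cancel_right) simp
qed

lemma Acoef_pos: "Acoef j > 0"
  unfolding Acoef_def
  by (rule suminf_pos) (use summable_mult[OF summable_uu_pow[of "2*j+2"], of 2] uu_pos in auto)

lemma ii_pow: "((c::complex) * \<i>)^(2*j+2) = (- (c^2))^(j+1)"
proof -
  have "2*j+2 = 2*(j+1)" by simp
  hence "(c * \<i>)^(2*j+2) = ((c * \<i>)^2)^(j+1)" by (simp only: power_mult)
  also have "(c * \<i>)^2 = - (c^2)" by (simp add: power_mult_distrib)
  finally show ?thesis .
qed

lemma Acoef_bern: "Acoef j = bernoulli (2*j+2) * ((-4)^(j+1) - (-16)^(j+1)) / fact (2*j+2)"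
proof -
  have "fps_nth (fps_X * Ac) (2*j+2) = complex_of_real (Acoef j)"
    by (simp add: Ac_def Afps_def)
  hence h1: "complex_of_real (Acoef j) = fps_nth (Bc (2*\<i>)) (2*j+2) - fps_nth (Bc (4*\<i>)) (2*j+2)"
    unfolding X_Ac by simp
  have h2: "\<And>c n. fps_nth (Bc c) n = complex_of_real (bernoulli n) * c^n / fact n" by (simp add: Bc_def)
  have p2: "(2*\<i>::complex)^(2*j+2) = complex_of_real ((-4)^(j+1))"
    using ii_pow[of 2 j] by simp
  have p4: "(4*\<i>::complex)^(2*j+2) = complex_of_real ((-16)^(j+1))"
    using ii_pow[of 4 j] by simp
  have "complex_of_real (Acoef j) = complex_of_real (bernoulli (2*j+2) * ((-4)^(j+1) - (-16)^(j+1)) / fact (2*j+2))"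
    unfolding h1 h2 p2 p4 by (simp add: diff_divide_distrib right_diff_distrib)
  thus ?thesis using of_real_eq_iff by blast
qed

lemma Acoef_abs: "Acoef j = 4^(j+1) * (4^(j+1) - 1) * \<bar>bernoulli (2*j+2)\<bar> / fact (2*j+2)"
proof -
  have e: "(-4::real)^(j+1) - (-16)^(j+1) = (-1)^j * (4^(j+1) * (4^(j+1) - 1))"
  proof -
    have "(-16::real)^(j+1) = (-4)^(j+1) * 4^(j+1)"
      by (simp add: power_mult_distrib[symmetric])
    thus ?thesis by (simp add: power_minus' algebra_simps)
  qed
  have "(4::real)^(j+1) > 1" by (rule one_less_power) auto
  hence pos: "(4::real)^(j+1) * (4^(j+1) - 1) > 0" and pos2: "(4::real)^(j+1) - 1 > 0" by simp_all
  have "Acoef j = \<bar>Acoef j\<bar>" using Acoef_pos[of j] by simp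
  also have "\<dots> = \<bar>bernoulli (2*j+2)\<bar> * (4^(j+1) * (4^(j+1) - 1)) / fact (2*j+2)"
    unfolding Acoef_bern e using pos pos2 by (simp add: abs_mult abs_divide)
  finally show ?thesis by simp
qed

lemma fin_ident:
  fixes y :: real assumes y: "y \<noteq> 1"
  shows "y/(1-y)^2 - (\<Sum>j<n. real j * y^j) = real n * y^n/(1-y) + y^(n+1)/(1-y)^2"
proof (induction n)
  case 0 thus ?case by simp
next
  case (Suc n)
  define D where "D = 1 - y"
  have d: "D \<noteq> 0" using y by (simp add: D_def)
  have f1: "y^(n+1)/D^2 - y^(Suc n+1)/D^2 = y^(n+1)/D"
  proof -
    have "y^(n+1) - y^(Suc n+1) = y^(n+1) * D" by (simp add: D_def algebra_simps)
    hence "y^(n+1)/D^2 - y^(Suc n+1)/D^2 = (y^(n+1) * D) / (D * D)"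
      by (simp add: power2_eq_square diff_divide_distrib[symmetric])
    thus ?thesis using d by simp
  qed
  have f2: "real n * y^n/D - real n * y^n = real n * y^(n+1)/D"
  proof -
    have "real n * y^n - real n * y^n * D = real n * y^(n+1)" by (simp add: D_def algebra_simps)
    thus ?thesis using d by (simp add: field_simps)
  qed
  have f3: "real (Suc n) * y^(Suc n)/D = real n * y^(n+1)/D + y^(n+1)/D"
    by (simp add: add_divide_distrib[symmetric] algebra_simps)
  have "y/(1-y)^2 - (\<Sum>j<Suc n. real j * y^j) = real n * y^n/D + y^(n+1)/D^2 - real n * y^n"
    using Suc by (simp add: D_def)
  also have "\<dots> = real (Suc n) * y^(Suc n)/D + y^(Suc n+1)/D^2"
    using f1 f2 f3 by linarith
  finally show ?case by (simp add: D_def)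
qed

lemma term_ident:
  fixes t v :: real assumes v: "v > \<bar>t\<bar>"
  shows "4*t^3/(v^2-t^2)^2 - (\<Sum>j<n. 4 * real j * t^(2*j+1)/v^(2*j+2)) =
         (4*t/v^2) * (real n * (t^2/v^2)^n/(1 - t^2/v^2) + (t^2/v^2)^(n+1)/(1 - t^2/v^2)^2)"
proof -
  define y where "y = t^2/v^2"
  have vp: "v > 0" using v by linarith
  have tv: "t^2 < v^2" using v by (metis abs_ge_zero power2_abs power_strict_mono zero_less_numeral)
  have y1: "y \<noteq> 1" "1 - y \<noteq> 0" using tv vp by (auto simp: y_def field_simps)
  have a: "4*t^3/(v^2-t^2)^2 = (4*t/v^2) * (y/(1-y)^2)"
    using vp tv unfolding y_def by (simp add: field_simps power2_eq_square power3_eq_cube)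
  have b: "4 * real j * t^(2*j+1)/v^(2*j+2) = (4*t/v^2) * (real j * y^j)" for j
  proof -
    have "y^j = t^(2*j)/v^(2*j)" unfolding y_def by (simp add: power_divide power_mult)
    thus ?thesis using vp by (simp add: power_add field_simps power2_eq_square)
  qed
  have "4*t^3/(v^2-t^2)^2 - (\<Sum>j<n. 4 * real j * t^(2*j+1)/v^(2*j+2)) =
        (4*t/v^2) * (y/(1-y)^2 - (\<Sum>j<n. real j * y^j))"
    unfolding a b by (simp add: sum_distrib_left right_diff_distrib)
  also have "\<dots> = (4*t/v^2) * (real n * y^n/(1-y) + y^(n+1)/(1-y)^2)"
    using fin_ident[OF y1(1)] by simp
  finally show ?thesis unfolding y_def .
qed

lemma G_ident:
  fixes t v :: real assumes v: "v > \<bar>t\<bar>"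
  shows "t * (1/(v - t)^2 + 1/(v + t)^2) - (1/(v - t) - 1/(v + t)) = 4*t^3/(v^2-t^2)^2"
proof -
  have ne: "v - t \<noteq> 0" "v + t \<noteq> 0" using v by (auto simp: abs_less_iff)
  define Q where "Q = (v - t)^2 * (v + t)^2"
  have q1: "t * (1/(v - t)^2) = t*(v+t)^2 / Q" using ne by (simp add: Q_def)
  have q2: "t * (1/(v + t)^2) = t*(v-t)^2 / Q" using ne by (simp add: Q_def)
  have q3: "1/(v - t) = (v-t)*(v+t)^2 / Q" using ne by (simp add: Q_def power2_eq_square)
  have q4: "1/(v + t) = (v+t)*(v-t)^2 / Q" using ne by (simp add: Q_def power2_eq_square)
  have "t * (1/(v - t)^2 + 1/(v + t)^2) - (1/(v - t) - 1/(v + t))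
        = (t*(v+t)^2 + t*(v-t)^2 - ((v-t)*(v+t)^2 - (v+t)*(v-t)^2)) / Q"
    unfolding distrib_left q1 q2 q3 q4 by (simp add: add_divide_distrib diff_divide_distrib)
  also have "t*(v+t)^2 + t*(v-t)^2 - ((v-t)*(v+t)^2 - (v+t)*(v-t)^2) = 4*t^3"
    by (simp add: algebra_simps power2_eq_square power3_eq_cube)
  also have "Q = (v^2-t^2)^2" unfolding Q_def by (simp add: power2_eq_square algebra_simps)
  finally show ?thesis .
qed

definition Hk :: "nat \<Rightarrow> real \<Rightarrow> nat \<Rightarrow> real" where
  "Hk N t k = (4*t/uu k^2) * (real N * (t^2/uu k^2)^N/(1 - t^2/uu k^2) + (t^2/uu k^2)^(N+1)/(1 - t^2/uu k^2)^2)"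

lemma core:
  fixes t :: real assumes t: "\<bar>t\<bar> < pi/2"
  shows "(\<lambda>k. Hk N t k) sums (t*(1/cos t)^2 - tan t - (\<Sum>j<N. 2*real j*Acoef j*t^(2*j+1)))"
proof -
  have u: "uu k > \<bar>t\<bar>" for k using uu_ge[of k] t by linarith
  have s1: "(\<lambda>k. t * (1/(uu k - t)^2 + 1/(uu k + t)^2) - (1/(uu k - t) - 1/(uu k + t)))
             sums (t*(1/cos t)^2 - tan t)"
    by (intro sums_diff sums_mult sec2_pf tan_pf t)
  hence s1': "(\<lambda>k. 4*t^3/(uu k^2-t^2)^2) sums (t*(1/cos t)^2 - tan t)"
    using G_ident[OF u] by simp
  have s2: "(\<lambda>k. \<Sum>j<N. 4 * real j * t^(2*j+1)/uu k^(2*j+2)) sums (\<Sum>j<N. 2*real j*Acoef j*t^(2*j+1))"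
  proof (rule sums_sum)
    fix j
    have "(\<lambda>k. (2 * real j * t^(2*j+1)) * (2 / uu k ^ (2*j+2))) sums ((2 * real j * t^(2*j+1)) * Acoef j)"
      by (intro sums_mult Acoef_sums)
    thus "(\<lambda>k. 4 * real j * t^(2*j+1)/uu k^(2*j+2)) sums (2*real j*Acoef j*t^(2*j+1))"
      by (simp add: algebra_simps)
  qed
  from sums_diff[OF s1' s2] show ?thesis
    unfolding Hk_def using term_ident[OF u] by simp
qed

lemma pow2N: "(x::real)^(2*N) = (x^2)^N" by (rule power_mult)
lemma pow2N1: "(x::real)^(2*N+1) = x * (x^2)^N" by (metis power_mult power_add power_one_right mult.commute)
lemma pow2N2: "(x::real)^(2*N+2) = x^2 * (x^2)^N" by (metis power_mult power_add mult.commute)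
lemma pow2N3: "(x::real)^(2*N+3) = x^3 * (x^2)^N"
proof -
  have "x^(2*N+3) = x^(2*N) * x^3" by (rule power_add)
  also have "\<dots> = (x^2)^N * x^3" by (simp only: pow2N)
  finally show ?thesis by (metis mult.commute)
qed
lemma pow2N4: "(x::real)^(2*N+4) = x^4 * (x^2)^N"
proof -
  have "x^(2*N+4) = x^(2*N) * x^4" by (rule power_add)
  also have "\<dots> = (x^2)^N * x^4" by (simp only: pow2N)
  finally show ?thesis by (metis mult.commute)
qed

lemma eval1:
  fixes K L c t :: real assumes K: "K > 0" and L: "L > 0" and c: "c > 0"
  defines "v \<equiv> c*pi/2"
  defines "y \<equiv> t^2/v^2"
  defines "q \<equiv> 4*K*L/c^2"
  shows "(4*t/v^2) * (real N * y^N) / q = real N * 2^(2*N+2) * t^(2*N+1)/pi^(2*N+2) * (1/(c^(2*N) * L * K))"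
proof -
  have yN: "y^N = (t^2)^N * 4^N / ((c^2)^N * (pi^2)^N)"
    by (simp add: y_def v_def power_divide power_mult_distrib field_simps)
  show ?thesis
  proof -
    have p: "(pi^2)^N > 0" "(c^2)^N > 0" "(4::real)^N > 0" using c by simp_all
    show ?thesis unfolding yN q_def v_def pow2N pow2N1 pow2N2
      using c K L p pi_gt_zero by (simp add: field_simps power_mult_distrib)
  qed
qed

lemma eval2:
  fixes K L c t :: real assumes K: "K > 0" and L: "L > 0" and c: "c > 0"
  defines "v \<equiv> c*pi/2"
  defines "y \<equiv> t^2/v^2"
  defines "q \<equiv> 4*K*L/c^2"
  shows "(4*t/v^2) * y^(N+1) / q^2 = 2^(2*N+2) * t^(2*N+3)/pi^(2*N+4) * (1/(c^(2*N) * L^2 * K^2))"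
proof -
  have yN: "y^(N+1) = t^2 * (t^2)^N * 4 * 4^N / (c^2 * (c^2)^N * (pi^2 * (pi^2)^N))"
    by (simp add: y_def v_def power_divide power_mult_distrib field_simps)
  have p: "(pi^2)^N > 0" "(c^2)^N > 0" "(4::real)^N > 0" using c by simp_all
  show ?thesis unfolding yN q_def v_def pow2N pow2N2 pow2N3 pow2N4
    using c K L p pi_gt_zero by (simp add: field_simps power_mult_distrib power2_eq_square power3_eq_cube power4_eq_xxxx)
qed

lemma eval3:
  fixes v t :: real assumes v: "v > 0"
  shows "(4*t/v^2) * (real N * (t^2/v^2)^N) = 4 * real N * t^(2*N+1) / v^(2*N+2)"
  unfolding pow2N1 pow2N2 using v by (simp add: power_divide field_simps)

lemma eval4:
  fixes v t :: real assumes v: "v > 0"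
  shows "(4*t/v^2) * (t^2/v^2)^(N+1) = 4 * t^(2*N+3) / v^(2*N+4)"
proof -
  have "(t^2/v^2)^(N+1) = t^2 * (t^2)^N / (v^2 * (v^2)^N)" by (simp add: power_divide)
  thus ?thesis unfolding pow2N3 pow2N4 using v by (simp add: field_simps power2_eq_square power3_eq_cube power4_eq_xxxx)
qed

definition Lt :: "nat \<Rightarrow> real \<Rightarrow> nat \<Rightarrow> real" where
  "Lt N t k = 4 * real N * t^(2*N+1) / uu (Suc k)^(2*N+2) + 4 * t^(2*N+3) / uu (Suc k)^(2*N+4)"

definition Mt :: "nat \<Rightarrow> real \<Rightarrow> nat \<Rightarrow> real" where
  "Mt N t k = real N * 2 ^ (2*N+2) * t ^ (2*N+1) / pi ^ (2*N+2) *
              (1 / ((2 * real (k+2) - 1) ^ (2*N) * real (k+2) * real (k+1)))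
            + 2 ^ (2*N+2) * t ^ (2*N+3) / pi ^ (2*N+4) *
              (1 / ((2 * real (k+2) - 1) ^ (2*N) * real (k+2) ^ 2 * real (k+1) ^ 2))"

lemma Hk_bounds:
  fixes t :: real assumes t: "0 < t" "t < pi/2"
  shows "Lt N t k < Hk N t (Suc k)" "Hk N t (Suc k) < Mt N t k"
proof -
  define K where "K = real (k+1)"
  define L where "L = real (k+2)"
  define c where "c = 2 * real (k+2) - 1"
  define v where "v = uu (Suc k)"
  define y where "y = t^2/v^2"
  define q where "q = 4*K*L/c^2"
  have K: "K > 0" and L: "L > 0" and c: "c > 0" "c > 1" by (simp_all add: K_def L_def c_def)
  have v: "v = c*pi/2" by (simp add: v_def c_def uu_def field_simps)
  have vp: "v > 0" by (simp add: v_def uu_pos)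
  have yp: "y > 0" using t vp by (simp add: y_def)
  have cc: "c^2 - 1 = 4*K*L" by (simp add: c_def K_def L_def power2_eq_square algebra_simps)
  have q: "q = 1 - 1/c^2" using c unfolding q_def cc[symmetric] by (simp add: diff_divide_distrib)
  have qp: "q > 0" using K L c by (simp add: q_def)
  have tt: "t^2 < (pi/2)^2" using t by (intro power_strict_mono) auto
  have "y < 1/c^2"
  proof -
    have "y = t^2 / (c^2 * (pi/2)^2)" by (simp add: y_def v power_mult_distrib power_divide field_simps)
    also have "\<dots> < (pi/2)^2 / (c^2 * (pi/2)^2)" using tt c by (intro divide_strict_right_mono) auto
    also have "\<dots> = 1/c^2" by simp
    finally show ?thesis .
  qed
  hence qy: "q < 1 - y" unfolding q by simp
  have y1: "1 - y > 0" "1 - y < 1" using qy qp yp by auto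
  define A1 where "A1 = (4*t/v^2) * (real N * y^N)"
  define A2 where "A2 = (4*t/v^2) * y^(N+1)"
  have A1: "A1 \<ge> 0" unfolding A1_def using t yp vp by simp
  have A2: "A2 > 0" unfolding A2_def using t yp vp by simp
  have H: "Hk N t (Suc k) = A1/(1-y) + A2/(1-y)^2"
    unfolding Hk_def A1_def A2_def y_def v_def by (simp add: distrib_left)
  have "A1/(1-y) \<le> A1/q" using A1 qp qy by (intro divide_left_mono) auto
  moreover have "A2/(1-y)^2 < A2/q^2" using A2 qp qy by (intro divide_strict_left_mono power_strict_mono) auto
  moreover have "A1/q = real N * 2 ^ (2*N+2) * t ^ (2*N+1) / pi ^ (2*N+2) * (1 / (c ^ (2*N) * L * K))"
    unfolding A1_def y_def v q_def using eval1[OF K L c(1), of t N] by simp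
  moreover have "A2/q^2 = 2 ^ (2*N+2) * t ^ (2*N+3) / pi ^ (2*N+4) * (1 / (c ^ (2*N) * L^2 * K^2))"
    unfolding A2_def y_def v q_def using eval2[OF K L c(1), of t N] by simp
  ultimately show "Hk N t (Suc k) < Mt N t k" unfolding H Mt_def
    by (simp add: c_def K_def L_def)
  have "A1 \<le> A1/(1-y)" using A1 y1 by (intro mult_imp_le_div_pos) (auto simp: mult_left_le)
  moreover have "A2 < A2/(1-y)^2"
  proof (rule mult_imp_less_div_pos)
    show "0 < (1-y)^2" using y1 by simp
    have "(1-y)^2 < 1" using y1 by (simp add: power_less_one_iff)
    thus "A2 * (1-y)^2 < A2" using A2 by simp
  qed
  moreover have "A1 = 4 * real N * t^(2*N+1) / v^(2*N+2)" unfolding A1_def y_def by (rule eval3[OF vp])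
  moreover have "A2 = 4 * t^(2*N+3) / v^(2*N+4)" unfolding A2_def y_def by (rule eval4[OF vp])
  ultimately show "Lt N t k < Hk N t (Suc k)" unfolding H Lt_def v_def by linarith
qed

lemma sums_strict_less:
  fixes f g :: "nat \<Rightarrow> real"
  assumes "f sums a" "g sums b" "\<And>n. f n < g n"
  shows "a < b"
proof -
  have "(\<lambda>n. g n - f n) sums (b - a)" by (rule sums_diff[OF assms(2,1)])
  hence "0 < b - a"
    using suminf_pos[of "\<lambda>n. g n - f n"] assms(3) by (simp add: sums_iff)
  thus ?thesis by simp
qed

lemma summable_ab:
  fixes N :: nat
  shows "summable (\<lambda>k. 1 / ((2 * real (k+2) - 1) ^ (2*N) * real (k+2) * real (k+1)))"
        "summable (\<lambda>k. 1 / ((2 * real (k+2) - 1) ^ (2*N) * real (k+2) ^ 2 * real (k+1) ^ 2))"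
proof -
  have base: "summable (\<lambda>k. 1 / (real k + 1)^2)"
    using inverse_squares_sums by (simp add: sums_iff add.commute)
  have c1: "(2 * real (k+2) - 1) ^ (2*N) \<ge> 1" for k by (intro one_le_power) auto
  show "summable (\<lambda>k. 1 / ((2 * real (k+2) - 1) ^ (2*N) * real (k+2) * real (k+1)))"
  proof (rule summable_comparison_test'[OF base])
    fix k
    have "(real k + 1)^2 \<le> (2 * real (k+2) - 1) ^ (2*N) * real (k+2) * real (k+1)"
    proof -
      have "(real k + 1)^2 = 1 * (real k + 1) * (real k + 1)" by (simp add: power2_eq_square)
      also have "\<dots> \<le> (2 * real (k+2) - 1) ^ (2*N) * real (k+2) * real (k+1)"
        using c1[of k] by (intro mult_mono) auto
      finally show ?thesis .
    qed
    thus "norm (1 / ((2 * real (k+2) - 1) ^ (2*N) * real (k+2) * real (k+1))) \<le> 1 / (real k + 1)^2"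
      using c1[of k] by (simp add: divide_simps)
  qed
  show "summable (\<lambda>k. 1 / ((2 * real (k+2) - 1) ^ (2*N) * real (k+2) ^ 2 * real (k+1) ^ 2))"
  proof (rule summable_comparison_test'[OF base])
    fix k
    have "(real k + 1)^2 \<le> (2 * real (k+2) - 1) ^ (2*N) * real (k+2) ^ 2 * real (k+1) ^ 2"
    proof -
      have "(real k + 1)^2 = 1 * 1 * (real k + 1)^2" by simp
      also have "\<dots> \<le> (2 * real (k+2) - 1) ^ (2*N) * real (k+2) ^ 2 * real (k+1) ^ 2"
        using c1[of k] by (intro mult_mono) (auto simp: add.commute)
      finally show ?thesis .
    qed
    thus "norm (1 / ((2 * real (k+2) - 1) ^ (2*N) * real (k+2) ^ 2 * real (k+1) ^ 2)) \<le> 1 / (real k + 1)^2"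
      using c1[of k] by (simp add: divide_simps)
  qed
qed

lemma H0_eval:
  fixes t :: real assumes t: "0 < t" "t < pi/2"
  shows "Hk N t 0 = real N * 2 ^ (2*N+4) * t ^ (2*N+1) / (pi ^ (2*N) * (pi^2 - 4 * t^2))
            + 2 ^ (2*N+6) * t ^ (2*N+3) / (pi ^ (2*N) * (pi^2 - 4 * t^2) ^ 2)"
proof -
  have u0: "uu 0 = pi/2" by (simp add: uu_def)
  have tt: "t^2 < (pi/2)^2" using t by (intro power_strict_mono) auto
  have d: "pi^2 - 4*t^2 > 0" using tt by (simp add: power_divide)
  have y: "t^2/(pi/2)^2 = 4*t^2/pi^2" by (simp add: power_divide)
  have y1: "1 - 4*t^2/pi^2 = (pi^2 - 4*t^2)/pi^2" by (simp add: field_simps)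
  have yN: "(4*t^2/pi^2)^N = 4^N * (t^2)^N / (pi^2)^N" by (simp add: power_divide power_mult_distrib)
  have p: "(pi^2)^N > 0" "(4::real)^N > 0" "(t^2)^N > 0" using t by simp_all
  show ?thesis
    unfolding Hk_def u0 y y1 power_Suc2[of "4*t^2/pi^2" N, symmetric] yN
    unfolding pow2N pow2N1 pow2N3 pow2N4 power_add
    using d p pi_gt_zero by (simp add: field_simps power2_eq_square power3_eq_cube)
qed

lemma sum_rewrite:
  assumes "N \<ge> 1"
  shows "(\<Sum>j=1..N-1. 2 * real j * 2 ^ (2*j+2) * (2 ^ (2*j+2) - 1) * \<bar>bernoulli (2*j+2)\<bar>
                              / fact (2*j+2) * t ^ (2*j+1)) = (\<Sum>j<N. 2*real j*Acoef j*t^(2*j+1))"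
proof -
  have e: "(2::real) ^ (2*j+2) = 4^(j+1)" for j
  proof -
    have "(2::real)^(2*j+2) = (2^2)^(j+1)" by (metis power_mult mult_2_right add_mult_distrib2 mult.commute nat_mult_1_right)
    thus ?thesis by simp
  qed
  have "{..<N} = insert 0 {1..N-1}" using assms by auto
  hence "(\<Sum>j<N. 2*real j*Acoef j*t^(2*j+1)) = (\<Sum>j=1..N-1. 2*real j*Acoef j*t^(2*j+1))"
    by simp
  also have "\<dots> = (\<Sum>j=1..N-1. 2 * real j * 2 ^ (2*j+2) * (2 ^ (2*j+2) - 1) * \<bar>bernoulli (2*j+2)\<bar>
                              / fact (2*j+2) * t ^ (2*j+1))"
    by (intro sum.cong refl) (unfold e, simp add: Acoef_abs)
  finally show ?thesis by simp
qed

lemma pieceL: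
  fixes t X f :: real and N m :: nat assumes f: "f > 0"
  shows "2 * real m * t^(2*N+1) * (4^(N+1) * (4^(N+1) - 1) * X / f - 2 / (pi/2)^(2*N+2))
       = real m * 2^(2*N+4) * t^(2*N+1) / pi^(2*N+2) * ((2^(2*N+2) - 1) * pi^(2*N+2) * X / (2*f) - 1)"
proof -
  define F where "F = (4::real)^N"
  define P where "P = pi^(2*N+2)"
  have Fp: "F > 0" and Pp: "P > 0" by (simp_all add: F_def P_def)
  have e1: "(2::real)^(2*N+2) = 4 * F" unfolding pow2N2 F_def by simp
  have e2: "(2::real)^(2*N+4) = 16 * F" unfolding pow2N4 F_def by simp
  have e3: "(pi/2)^(2*N+2) = P / (4*F)" unfolding power_divide e1 P_def ..
  have e4: "(4::real)^(N+1) = 4 * F" by (simp add: F_def)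
  show ?thesis unfolding e1 e2 e3 e4 P_def[symmetric]
    using Fp Pp f by (simp add: field_simps)
qed

theorem theorem11:
  fixes N :: nat and t :: real
  assumes "N \<ge> 1" and "0 < t" and "t < pi / 2"
  defines "L \<equiv> real N * 2 ^ (2*N+4) * t ^ (2*N+1) / pi ^ (2*N+2) *
              ((2 ^ (2*N+2) - 1) * pi ^ (2*N+2) * \<bar>bernoulli (2*N+2)\<bar> / (2 * fact (2*N+2)) - 1)
            + 2 ^ (2*N+6) * t ^ (2*N+3) / pi ^ (2*N+4) *
              ((2 ^ (2*N+4) - 1) * pi ^ (2*N+4) * \<bar>bernoulli (2*N+4)\<bar> / (2 * fact (2*N+4)) - 1)"
    and "M \<equiv> real N * 2 ^ (2*N+2) * t ^ (2*N+1) / pi ^ (2*N+2) *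
              (\<Sum>k. 1 / ((2 * real (k+2) - 1) ^ (2*N) * real (k+2) * real (k+1)))
            + 2 ^ (2*N+2) * t ^ (2*N+3) / pi ^ (2*N+4) *
              (\<Sum>k. 1 / ((2 * real (k+2) - 1) ^ (2*N) * real (k+2) ^ 2 * real (k+1) ^ 2))"
    and "F \<equiv> t * (1 / cos t) ^ 2 - tan t
            - (\<Sum>j=1..N-1. 2 * real j * 2 ^ (2*j+2) * (2 ^ (2*j+2) - 1) * \<bar>bernoulli (2*j+2)\<bar>
                              / fact (2*j+2) * t ^ (2*j+1))
            - real N * 2 ^ (2*N+4) * t ^ (2*N+1) / (pi ^ (2*N) * (pi^2 - 4 * t^2))
            - 2 ^ (2*N+6) * t ^ (2*N+3) / (pi ^ (2*N) * (pi^2 - 4 * t^2) ^ 2)"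
  shows "L < F \<and> F < M"
proof -
  have t: "\<bar>t\<bar> < pi/2" using assms(2,3) by simp
  have c: "(\<lambda>k. Hk N t k) sums (t*(1/cos t)^2 - tan t - (\<Sum>j<N. 2*real j*Acoef j*t^(2*j+1)))"
    by (rule core[OF t])
  have "(\<lambda>k. Hk N t (Suc k)) sums (t*(1/cos t)^2 - tan t - (\<Sum>j<N. 2*real j*Acoef j*t^(2*j+1)) - Hk N t 0)"
    by (subst sums_Suc_iff) (simp only: diff_add_cancel, rule c)
  moreover have "t*(1/cos t)^2 - tan t - (\<Sum>j<N. 2*real j*Acoef j*t^(2*j+1)) - Hk N t 0 = F"
    unfolding F_def sum_rewrite[OF assms(1)] H0_eval[OF assms(2,3)] by simp
  ultimately have Fs: "(\<lambda>k. Hk N t (Suc k)) sums F" by simp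
  have Ms: "(\<lambda>k. Mt N t k) sums M"
    unfolding M_def Mt_def
    by (intro sums_add sums_mult summable_sums summable_ab)
  have FM: "F < M"
    by (rule sums_strict_less[OF Fs Ms]) (rule Hk_bounds[OF assms(2,3)])
  have Ls: "(\<lambda>k. Lt N t k) sums L"
  proof -
    have a1: "(\<lambda>k. 2 / uu (Suc k) ^ (2*N+2)) sums (Acoef N - 2 / uu 0 ^ (2*N+2))"
      by (subst sums_Suc_iff) (simp only: diff_add_cancel, rule Acoef_sums)
    have a2: "(\<lambda>k. 2 / uu (Suc k) ^ (2*N+4)) sums (Acoef (N+1) - 2 / uu 0 ^ (2*N+4))"
    proof -
      have ee: "2*(N+1)+2 = 2*N+4" by simp
      show ?thesis by (subst sums_Suc_iff) (simp only: diff_add_cancel, rule Acoef_sums[of "N+1", unfolded ee])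
    qed
    have "(\<lambda>k. (2 * real N * t^(2*N+1)) * (2 / uu (Suc k) ^ (2*N+2)) + (2 * t^(2*N+3)) * (2 / uu (Suc k) ^ (2*N+4)))
          sums ((2 * real N * t^(2*N+1)) * (Acoef N - 2 / uu 0 ^ (2*N+2)) + (2 * t^(2*N+3)) * (Acoef (N+1) - 2 / uu 0 ^ (2*N+4)))"
      by (intro sums_add sums_mult a1 a2)
    moreover have "(\<lambda>k. (2 * real N * t^(2*N+1)) * (2 / uu (Suc k) ^ (2*N+2)) + (2 * t^(2*N+3)) * (2 / uu (Suc k) ^ (2*N+4)))
                   = (\<lambda>k. Lt N t k)"
      by (rule ext) (simp add: Lt_def)
    moreover have "(2 * real N * t^(2*N+1)) * (Acoef N - 2 / uu 0 ^ (2*N+2)) + (2 * t^(2*N+3)) * (Acoef (N+1) - 2 / uu 0 ^ (2*N+4)) = L"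
    proof -
      have u0: "uu 0 = pi/2" by (simp add: uu_def)
      have AN: "Acoef N = 4^(N+1) * (4^(N+1) - 1) * \<bar>bernoulli (2*N+2)\<bar> / fact (2*N+2)"
        by (rule Acoef_abs)
      have AN1: "Acoef (N+1) = 4^((N+1)+1) * (4^((N+1)+1) - 1) * \<bar>bernoulli (2*(N+1)+2)\<bar> / fact (2*(N+1)+2)"
        by (rule Acoef_abs)
      have p1: "2 * real N * t^(2*N+1) * (Acoef N - 2 / uu 0 ^ (2*N+2)) =
          real N * 2 ^ (2*N+4) * t ^ (2*N+1) / pi ^ (2*N+2) *
              ((2 ^ (2*N+2) - 1) * pi ^ (2*N+2) * \<bar>bernoulli (2*N+2)\<bar> / (2 * fact (2*N+2)) - 1)"
        unfolding AN u0 by (rule pieceL) simp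
      have p2: "2 * real 1 * t^(2*(N+1)+1) * (Acoef (N+1) - 2 / uu 0 ^ (2*(N+1)+2)) =
          real 1 * 2 ^ (2*(N+1)+4) * t ^ (2*(N+1)+1) / pi ^ (2*(N+1)+2) *
              ((2 ^ (2*(N+1)+2) - 1) * pi ^ (2*(N+1)+2) * \<bar>bernoulli (2*(N+1)+2)\<bar> / (2 * fact (2*(N+1)+2)) - 1)"
        unfolding AN1 u0 by (rule pieceL) simp
      have e: "2*(N+1)+1 = 2*N+3" "2*(N+1)+2 = 2*N+4" "2*(N+1)+4 = 2*N+6" by simp_all
      show ?thesis using p1 p2 unfolding e L_def by simp
    qed
    ultimately show ?thesis by simp
  qed
  have LF: "L < F"
    by (rule sums_strict_less[OF Ls Fs]) (rule Hk_bounds[OF assms(2,3)])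
  from LF FM show ?thesis by simp
qed

end
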